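(* Let $E\subset\mathbb{S}^1\times M_{2\times2}(\mathbb{C})$ be a real-analytic complex line subbundle over $\mathbb{S}^1$ such that (1) $E^*=E$, i.e. for each $\lambda\in\mathbb{S}^1$ the fiber $E(\lambda)$ is closed under conjugate transpose, and (2) for every $\lambda\in\mathbb{S}^1$ except possibly finitely many, the fiber $E(\lambda)$ contains a positive definite Hermitian matrix. Then there exists a real-analytic section $X$ of $E$ such that $X(\lambda)$ is Hermitian and positive semidefinite for every $\lambda\in\mathbb{S}^1$ and $\det X\not\equiv0$. *)

theory Defs
  imports "HOL-Analysis.Analysis"
begin

type_synonym cmat2 = "complex^2^2"

definition conj_transpose :: "cmat2 \<Rightarrow> cmat2" where
  "conj_transpose A = (\<chi> i j. cnj (A $ j $ i))"

definition hermitian :: "cmat2 \<Rightarrow> bool" where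
  "hermitian A \<longleftrightarrow> conj_transpose A = A"

definition qform :: "cmat2 \<Rightarrow> complex^2 \<Rightarrow> complex" where
  "qform A x = (\<Sum>i\<in>UNIV. \<Sum>j\<in>UNIV. cnj (x $ i) * A $ i $ j * x $ j)"

definition pos_def :: "cmat2 \<Rightarrow> bool" where
  "pos_def A \<longleftrightarrow> hermitian A \<and> (\<forall>x. x \<noteq> 0 \<longrightarrow> 0 < Re (qform A x))"

definition pos_semidef :: "cmat2 \<Rightarrow> bool" where
  "pos_semidef A \<longleftrightarrow> hermitian A \<and> (\<forall>x. 0 \<le> Re (qform A x))"

definition cscale :: "complex \<Rightarrow> cmat2 \<Rightarrow> cmat2" where
  "cscale c A = (\<chi> i j. c * A $ i $ j)"

definition cspan1 :: "cmat2 \<Rightarrow> cmat2 set" where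
  "cspan1 A = {cscale c A | c. True}"

definition real_analytic_on :: "real set \<Rightarrow> (real \<Rightarrow> complex) \<Rightarrow> bool" where
  "real_analytic_on S f \<longleftrightarrow>
     (\<forall>x\<in>S. \<exists>r>0. \<exists>a::nat \<Rightarrow> complex.
        \<forall>y. \<bar>y - x\<bar> < r \<longrightarrow> (\<lambda>n. a n * complex_of_real (y - x) ^ n) sums f y)"

definition real_analytic_mat_on :: "real set \<Rightarrow> (real \<Rightarrow> cmat2) \<Rightarrow> bool" where
  "real_analytic_mat_on S f \<longleftrightarrow> (\<forall>i j. real_analytic_on S (\<lambda>t. f t $ i $ j))"

definition real_analytic_circle_section :: "(complex \<Rightarrow> cmat2) \<Rightarrow> bool" where
  "real_analytic_circle_section X \<longleftrightarrow> real_analytic_mat_on UNIV (\<lambda>\<theta>. X (cis \<theta>))"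

definition analytic_line_subbundle :: "(complex \<Rightarrow> cmat2 set) \<Rightarrow> bool" where
  "analytic_line_subbundle E \<longleftrightarrow>
     (\<forall>\<theta>0::real. \<exists>r>0. \<exists>s :: real \<Rightarrow> cmat2.
        real_analytic_mat_on {\<theta>0 - r <..< \<theta>0 + r} s \<and>
        (\<forall>\<theta>\<in>{\<theta>0 - r <..< \<theta>0 + r}. s \<theta> \<noteq> 0 \<and> E (cis \<theta>) = cspan1 (s \<theta>)))"

end

theory Submission
  imports Defs "HOL-Complex_Analysis.Cauchy_Integral_Formula"
begin


lemma half_aux: "0 \<le> (c::real) \<Longrightarrow> c < r \<Longrightarrow> 0 \<le> (c+r)/2 \<and> (c+r)/2 < r \<and> c < (c+r)/2" by auto

lemma ra_ext:
  assumes sm0: "\<forall>y. \<bar>y - x\<bar> < r \<longrightarrow> (\<lambda>n. a n * complex_of_real (y - x) ^ n) sums f y"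
  shows "\<exists>F. F holomorphic_on ball (of_real x) r \<and> (\<forall>y. \<bar>y-x\<bar> < r \<longrightarrow> F (of_real y) = f y)"
proof -
  define F where "F w = (\<Sum>n. a n * (w - of_real x)^n)" for w
  have sm: "(\<lambda>n. a n * (w - of_real x)^n) sums F w" if "w \<in> ball (of_real x) r" for w
  proof -
    define y where "y = x + (cmod (w - of_real x) + r)/2"
    have n: "cmod (w - of_real x) < r" using that by (simp add: dist_norm norm_minus_commute)
    have yx: "y - x = (cmod (w - of_real x) + r)/2" by (simp add: y_def)
    have p0: "0 \<le> y - x" "y - x < r" "cmod (w - of_real x) < y - x" unfolding yx using half_aux[OF norm_ge_zero[of "w - of_real x"] n] by auto
    have "\<bar>y - x\<bar> < r" using p0 by linarith
    hence "summable (\<lambda>n. a n * complex_of_real (y-x)^n)" using sm0 sums_summable by blast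
    moreover have "cmod (complex_of_real (y - x)) = y - x" unfolding norm_of_real using p0 by simp
    hence "cmod (w - of_real x) < cmod (complex_of_real (y - x))" using p0 by simp
    ultimately have "summable (\<lambda>n. a n * (w - of_real x)^n)" by (rule powser_inside)
    thus ?thesis by (simp add: F_def summable_sums)
  qed
  have "F holomorphic_on ball (of_real x) r" by (rule power_series_holomorphic) (use sm in auto)
  moreover have "F (of_real y) = f y" if "\<bar>y-x\<bar><r" for y
  proof -
    have "cmod (of_real x - of_real y) = \<bar>x - y\<bar>" using norm_of_real[of "x - y"] by simp
    hence "of_real y \<in> ball (complex_of_real x) r" using that by (simp add: dist_norm abs_minus_commute)
    from sm[OF this] have "(\<lambda>n. a n * complex_of_real (y - x)^n) sums F (of_real y)" by simp
    with sm0 that show ?thesis using sums_unique2 by blast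
  qed
  ultimately show ?thesis by blast
qed

lemma ra_back:
  assumes "F holomorphic_on ball (of_real x) r" "r>0" "\<forall>y. \<bar>y-x\<bar><r \<longrightarrow> F (of_real y) = f y"
  shows "\<exists>r>0. \<exists>a. \<forall>y. \<bar>y - x\<bar> < r \<longrightarrow> (\<lambda>n. a n * complex_of_real (y - x) ^ n) sums f y"
proof (intro exI conjI allI impI)
  fix y assume y: "\<bar>y - x\<bar> < r"
  have "cmod (of_real x - of_real y) = \<bar>x - y\<bar>" using norm_of_real[of "x - y"] by simp
  hence "of_real y \<in> ball (complex_of_real x) r" using y by (simp add: dist_norm abs_minus_commute)
  from holomorphic_power_series[OF assms(1) this]
  show "(\<lambda>n. (deriv ^^ n) F (of_real x) / fact n * complex_of_real (y - x) ^ n) sums f y"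
    using assms(3) y by simp
qed (use assms in auto)

lemma ra_cont:
  assumes "real_analytic_on S f" "x \<in> S"
  shows "isCont f x"
proof -
  obtain r a where r: "r>0" and sm: "\<forall>y. \<bar>y - x\<bar> < r \<longrightarrow> (\<lambda>n. a n * complex_of_real (y - x) ^ n) sums f y"
    using assms unfolding real_analytic_on_def by blast
  obtain F where F: "F holomorphic_on ball (of_real x) r" "\<forall>y. \<bar>y-x\<bar> < r \<longrightarrow> F (of_real y) = f y"
    using ra_ext[OF sm] by blast
  have "isCont F (of_real x)"
    by (rule continuous_on_interior[OF holomorphic_on_imp_continuous_on[OF F(1)]]) (simp add: r)
  moreover have "isCont (\<lambda>y. complex_of_real y) x" by (intro continuous_intros)
  ultimately have c: "isCont (\<lambda>y. F (of_real y)) x" using isCont_o2 by blast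
  have "\<forall>y. dist y x < r \<longrightarrow> F (of_real y) = f y" using F(2) by (simp add: dist_real_def)
  hence "eventually (\<lambda>y. F (of_real y) = f y) (nhds x)"
    unfolding eventually_nhds_metric using r by blast
  from isCont_cong[OF this] c show ?thesis by simp
qed

lemma ra_quot:
  assumes a1: "real_analytic_on S f1" and a2: "real_analytic_on S f2" and a3: "real_analytic_on S f3"
    and x: "x \<in> S" and nz: "f2 x + f3 x \<noteq> 0"
  shows "\<exists>r>0. \<exists>a. \<forall>y. \<bar>y - x\<bar> < r \<longrightarrow> (\<lambda>n. a n * complex_of_real (y - x) ^ n) sums (f1 y / (f2 y + f3 y))"
proof -
  obtain r1 b1 where r1: "r1>0" and sm1: "\<forall>y. \<bar>y - x\<bar> < r1 \<longrightarrow> (\<lambda>n. b1 n * complex_of_real (y - x) ^ n) sums f1 y"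
    using a1 x unfolding real_analytic_on_def by blast
  obtain r2 b2 where r2: "r2>0" and sm2: "\<forall>y. \<bar>y - x\<bar> < r2 \<longrightarrow> (\<lambda>n. b2 n * complex_of_real (y - x) ^ n) sums f2 y"
    using a2 x unfolding real_analytic_on_def by blast
  obtain r3 b3 where r3: "r3>0" and sm3: "\<forall>y. \<bar>y - x\<bar> < r3 \<longrightarrow> (\<lambda>n. b3 n * complex_of_real (y - x) ^ n) sums f3 y"
    using a3 x unfolding real_analytic_on_def by blast
  obtain F1 where F1: "F1 holomorphic_on ball (of_real x) r1" "\<forall>y. \<bar>y-x\<bar> < r1 \<longrightarrow> F1 (of_real y) = f1 y"
    using ra_ext[OF sm1] by blast
  obtain F2 where F2: "F2 holomorphic_on ball (of_real x) r2" "\<forall>y. \<bar>y-x\<bar> < r2 \<longrightarrow> F2 (of_real y) = f2 y"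
    using ra_ext[OF sm2] by blast
  obtain F3 where F3: "F3 holomorphic_on ball (of_real x) r3" "\<forall>y. \<bar>y-x\<bar> < r3 \<longrightarrow> F3 (of_real y) = f3 y"
    using ra_ext[OF sm3] by blast
  define \<rho> where "\<rho> = min r1 (min r2 r3)"
  have rho: "\<rho> > 0" using r1 r2 r3 by (simp add: \<rho>_def)
  have sub: "ball (complex_of_real x) \<rho> \<subseteq> ball (of_real x) r1" "ball (complex_of_real x) \<rho> \<subseteq> ball (of_real x) r2"
     "ball (complex_of_real x) \<rho> \<subseteq> ball (of_real x) r3" by (auto simp: \<rho>_def)
  have hG: "(\<lambda>w. F2 w + F3 w) holomorphic_on ball (of_real x) \<rho>"
    using F2(1) F3(1) sub by (intro holomorphic_intros) (auto intro: holomorphic_on_subset)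
  have "isCont (\<lambda>w. F2 w + F3 w) (of_real x)"
    by (rule continuous_on_interior[OF holomorphic_on_imp_continuous_on[OF hG]]) (simp add: rho)
  moreover have "F2 (of_real x) + F3 (of_real x) \<noteq> 0" using F2(2) F3(2) r2 r3 nz by simp
  ultimately obtain e where e: "e>0" "\<forall>w. dist (of_real x) w < e \<longrightarrow> F2 w + F3 w \<noteq> 0"
    using continuous_at_avoid by blast
  define \<delta> where "\<delta> = min \<rho> e"
  have d: "\<delta> > 0" using rho e by (simp add: \<delta>_def)
  have dl: "\<delta> \<le> r1" "\<delta> \<le> r2" "\<delta> \<le> r3" "\<delta> \<le> e" by (simp_all add: \<delta>_def \<rho>_def)
  have "(\<lambda>w. F1 w / (F2 w + F3 w)) holomorphic_on ball (of_real x) \<delta>"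
  proof (intro holomorphic_intros)
    show "F1 holomorphic_on ball (complex_of_real x) \<delta>"
      by (rule holomorphic_on_subset[OF F1(1)]) (rule subset_ball, rule dl)
    show "F2 holomorphic_on ball (complex_of_real x) \<delta>"
      by (rule holomorphic_on_subset[OF F2(1)]) (rule subset_ball, rule dl)
    show "F3 holomorphic_on ball (complex_of_real x) \<delta>"
      by (rule holomorphic_on_subset[OF F3(1)]) (rule subset_ball, rule dl)
    show "\<And>w. w \<in> ball (complex_of_real x) \<delta> \<Longrightarrow> F2 w + F3 w \<noteq> 0" using e dl(4) by force
  qed
  moreover have eqq: "\<forall>y. \<bar>y-x\<bar><\<delta> \<longrightarrow> F1 (of_real y) / (F2 (of_real y) + F3 (of_real y)) = f1 y / (f2 y + f3 y)"
    using F1(2) F2(2) F3(2) dl by force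
  ultimately show ?thesis by (rule ra_back[OF _ d])
qed



definition tr2 :: "cmat2 \<Rightarrow> complex" where "tr2 A = A$1$1 + A$2$2"

lemma cmat2_eq: "(A::cmat2) = B \<longleftrightarrow> A$1$1 = B$1$1 \<and> A$1$2 = B$1$2 \<and> A$2$1 = B$2$1 \<and> A$2$2 = B$2$2"
  by (auto simp: vec_eq_iff forall_2)

lemma cscale_nth[simp]: "cscale c A $ i $ j = c * A$i$j" by (simp add: cscale_def)
lemma ct_nth[simp]: "conj_transpose A $ i $ j = cnj (A$j$i)" by (simp add: conj_transpose_def)
lemma tr2_cscale: "tr2 (cscale c A) = c * tr2 A" by (simp add: tr2_def algebra_simps)
lemma det_cscale: "det (cscale c A) = c^2 * det A" by (simp add: det_2 algebra_simps power2_eq_square)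
lemma cscale_cscale: "cscale a (cscale b A) = cscale (a*b) A" by (simp add: cmat2_eq)
lemma cscale_zero_iff: "cscale c A = 0 \<longleftrightarrow> c = 0 \<or> A = 0" by (auto simp: cmat2_eq)
lemma qform_expand: "qform A x = cnj(x$1)*A$1$1*x$1 + cnj(x$1)*A$1$2*x$2 + cnj(x$2)*A$2$1*x$1 + cnj(x$2)*A$2$2*x$2"
  by (simp add: qform_def sum_2)
lemma qform_cscale: "qform (cscale c A) x = c * qform A x" by (simp add: qform_expand algebra_simps)
lemma hermitian_nth: "hermitian A \<Longrightarrow> cnj (A$j$i) = A$i$j"
  unfolding hermitian_def by (metis ct_nth)

lemma real_of_cnj_eq: assumes "cnj z = z" shows "z = complex_of_real (Re z)"
proof -
  have "Im z = - Im z" using arg_cong[OF assms, of Im] by simp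
  thus ?thesis by (simp add: complex_eq_iff)
qed

lemma qf_aux: "A$1$1 = of_real p \<Longrightarrow> A$2$2 = of_real t \<Longrightarrow> A$2$1 = cnj (A$1$2) \<Longrightarrow>
   Re (qform A (vector [-A$1$2, A$1$1])) = p * (p*t - (cmod (A$1$2))^2)"
  by (simp add: qform_expand cmod_power2[unfolded power2_eq_square] algebra_simps power2_eq_square)

lemma posdef_facts:
  assumes P: "pos_def P"
  shows "P$1$1 = of_real (Re (P$1$1))" "P$2$2 = of_real (Re (P$2$2))" "P$2$1 = cnj (P$1$2)"
    "Re (P$1$1) > 0" "Re (P$2$2) > 0" "Re (P$1$1) * Re (P$2$2) - (cmod (P$1$2))^2 > 0"
proof -
  have h: "hermitian P" and q: "\<And>x. x \<noteq> 0 \<Longrightarrow> 0 < Re (qform P x)" using P by (auto simp: pos_def_def)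
  show a: "P$1$1 = of_real (Re (P$1$1))" by (rule real_of_cnj_eq) (rule hermitian_nth[OF h])
  show b: "P$2$2 = of_real (Re (P$2$2))" by (rule real_of_cnj_eq) (rule hermitian_nth[OF h])
  show c: "P$2$1 = cnj (P$1$2)" using hermitian_nth[OF h, of 1 2] by simp
  have "vector [1, 0] \<noteq> (0::complex^2)" by (simp add: vec_eq_iff forall_2)
  from q[OF this] show p: "Re (P$1$1) > 0" by (simp add: qform_expand)
  have "vector [0, 1] \<noteq> (0::complex^2)" by (simp add: vec_eq_iff forall_2)
  from q[OF this] show "Re (P$2$2) > 0" by (simp add: qform_expand)
  have "vector [- P$1$2, P$1$1] \<noteq> (0::complex^2)" using p by (auto simp: vec_eq_iff forall_2)
  from q[OF this] have "0 < Re (qform P (vector [- P$1$2, P$1$1]))" .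
  also have "Re (qform P (vector [- P$1$2, P$1$1])) = Re (P$1$1) * (Re (P$1$1) * Re (P$2$2) - (cmod (P$1$2))^2)"
    by (rule qf_aux[OF a b c])
  finally show "Re (P$1$1) * Re (P$2$2) - (cmod (P$1$2))^2 > 0" using p
    by (simp add: zero_less_mult_iff)
qed

lemma posdef_tr_det:
  assumes P: "pos_def P"
  shows "tr2 P = of_real (Re (P$1$1) + Re (P$2$2))" "det P = of_real (Re (P$1$1) * Re (P$2$2) - (cmod (P$1$2))^2)"
    "Re (P$1$1) + Re (P$2$2) > 0" "Re (P$1$1) * Re (P$2$2) - (cmod (P$1$2))^2 > 0"
    "4 * cmod (det P) \<le> (cmod (tr2 P))^2"
proof -
  note f = posdef_facts[OF P]
  show t: "tr2 P = of_real (Re (P$1$1) + Re (P$2$2))" unfolding tr2_def by (subst f(1), subst f(2)) simp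
  have "det P = P$1$1 * P$2$2 - P$1$2 * cnj (P$1$2)" by (simp add: det_2 f(3))
  also have "\<dots> = of_real (Re (P$1$1) * Re (P$2$2) - (cmod (P$1$2))^2)"
    by (subst f(1), subst f(2)) (simp only: complex_norm_square[symmetric] of_real_mult of_real_diff)
  finally show d: "det P = of_real (Re (P$1$1) * Re (P$2$2) - (cmod (P$1$2))^2)" .
  show "Re (P$1$1) + Re (P$2$2) > 0" using f by simp
  show "Re (P$1$1) * Re (P$2$2) - (cmod (P$1$2))^2 > 0" using f by simp
  define p where "p = Re (P$1$1)"
  define u where "u = Re (P$2$2)"
  define D where "D = Re (P$1$1) * Re (P$2$2) - (cmod (P$1$2))^2"
  have D: "0 < D" "D \<le> p * u" using f(6) by (auto simp: D_def p_def u_def)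
  have "(p+u)^2 - 4*(p*u) = (p-u)^2" by (simp add: power2_eq_square algebra_simps)
  hence "4 * (p * u) \<le> (p + u)^2" using zero_le_power2[of "p-u"] by linarith
  moreover have "cmod (det P) = D" unfolding d norm_of_real D_def[symmetric] using D(1) by simp
  moreover have "cmod (tr2 P) = p + u" unfolding t norm_of_real using f(4,5) by (simp add: p_def u_def)
  ultimately show "4 * cmod (det P) \<le> (cmod (tr2 P))^2" using D by simp
qed

lemma cspan_pos_ineq:
  assumes P: "pos_def P" and PS: "P = cscale c S"
  shows "c \<noteq> 0" "4 * cmod (det S) \<le> (cmod (tr2 S))^2"
proof -
  have "P \<noteq> 0" using posdef_facts(4)[OF P] by auto
  thus c: "c \<noteq> 0" using PS by (auto simp: cscale_zero_iff)
  have "4 * cmod (det P) \<le> (cmod (tr2 P))^2" by (rule posdef_tr_det(5)[OF P])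
  hence "(cmod c)^2 * (4 * cmod (det S)) \<le> (cmod c)^2 * (cmod (tr2 S))^2"
    unfolding PS det_cscale tr2_cscale by (simp add: norm_mult norm_power power_mult_distrib algebra_simps)
  thus "4 * cmod (det S) \<le> (cmod (tr2 S))^2" using c by simp
qed

lemma tr_zero_det:
  assumes S: "S \<noteq> 0" and c: "conj_transpose S = cscale c S" and t: "tr2 S = 0"
  shows "det S \<noteq> 0"
proof
  assume d: "det S = 0"
  have e11: "cnj (S$1$1) = c * S$1$1" using arg_cong[OF c, of "\<lambda>A. A$1$1"] by simp
  have e12: "cnj (S$2$1) = c * S$1$2" using arg_cong[OF c, of "\<lambda>A. A$1$2"] by simp
  have e21: "cnj (S$1$2) = c * S$2$1" using arg_cong[OF c, of "\<lambda>A. A$2$1"] by simp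
  have s22: "S$2$2 = - S$1$1" using t by (simp add: tr2_def add_eq_0_iff)
  have "S$1$1 * cnj (S$1$1) + S$2$1 * cnj (S$2$1) = c * (S$1$1 * S$1$1 + S$1$2 * S$2$1)"
    by (simp add: e11 e12 algebra_simps)
  also have "S$1$1 * S$1$1 + S$1$2 * S$2$1 = - det S" by (simp add: det_2 s22)
  finally have "S$1$1 * cnj (S$1$1) + S$2$1 * cnj (S$2$1) = 0" using d by simp
  hence "of_real ((cmod (S$1$1))^2 + (cmod (S$2$1))^2) = (0::complex)"
    by (simp only: complex_norm_square[symmetric] of_real_add)
  hence "(cmod (S$1$1))^2 + (cmod (S$2$1))^2 = 0" by (simp only: of_real_eq_0_iff)
  hence z: "S$1$1 = 0" "S$2$1 = 0" by (simp_all add: sum_power2_eq_zero_iff)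
  hence "S$1$2 = 0" using e21 by simp
  with z s22 have "S = 0" by (simp add: cmat2_eq)
  with S show False by simp
qed

lemma fiber_X:
  assumes S: "S \<noteq> 0" and cS: "conj_transpose S \<in> cspan1 S" and t: "tr2 S \<noteq> 0"
  shows "hermitian (cscale (1/tr2 S) S)" "tr2 (cscale (1/tr2 S) S) = 1"
    "\<And>A. A \<in> cspan1 S \<Longrightarrow> tr2 A = 1 \<Longrightarrow> A = cscale (1/tr2 S) S"
proof -
  obtain c where c: "conj_transpose S = cscale c S" using cS by (auto simp: cspan1_def)
  have "cnj (tr2 S) = c * tr2 S"
    using arg_cong[OF c, of "\<lambda>A. A$1$1"] arg_cong[OF c, of "\<lambda>A. A$2$2"] by (simp add: tr2_def algebra_simps)
  hence cc: "c = cnj (tr2 S) / tr2 S" using t by (simp add: field_simps)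
  have ij: "cnj (S$j$i) = c * S$i$j" for i j using arg_cong[OF c, of "\<lambda>A. A$i$j"] by simp
  show "hermitian (cscale (1/tr2 S) S)"
    unfolding hermitian_def by (simp add: vec_eq_iff ij cc)
  show "tr2 (cscale (1/tr2 S) S) = 1" using t by (simp add: tr2_cscale)
  fix A assume "A \<in> cspan1 S" "tr2 A = 1"
  then obtain k where k: "A = cscale k S" "k * tr2 S = 1" by (auto simp: cspan1_def tr2_cscale)
  hence "k = 1 / tr2 S" using t by (simp add: field_simps)
  thus "A = cscale (1/tr2 S) S" using k by simp
qed

definition Xof :: "(complex \<Rightarrow> cmat2 set) \<Rightarrow> complex \<Rightarrow> cmat2" where
  "Xof E z = (SOME A. A \<in> E z \<and> hermitian A \<and> tr2 A = 1)"

lemma Xof_eq: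
  assumes "E z = cspan1 S" "S \<noteq> 0" "conj_transpose S \<in> E z" "tr2 S \<noteq> 0"
  shows "Xof E z = cscale (1/tr2 S) S"
  unfolding Xof_def
proof (rule some_equality)
  show "cscale (1/tr2 S) S \<in> E z \<and> hermitian (cscale (1/tr2 S) S) \<and> tr2 (cscale (1/tr2 S) S) = 1"
    using fiber_X[of S] assms by (auto simp: cspan1_def)
  show "\<And>A. A \<in> E z \<and> hermitian A \<and> tr2 A = 1 \<Longrightarrow> A = cscale (1/tr2 S) S"
    using fiber_X(3)[of S] assms by auto
qed

lemma generic_X:
  assumes P: "pos_def P" and PS: "P = cscale c S"
  shows "tr2 S \<noteq> 0" "\<And>v. 0 \<le> Re (qform (cscale (1/tr2 S) S) v)" "det (cscale (1/tr2 S) S) \<noteq> 0"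
proof -
  have c: "c \<noteq> 0" by (rule cspan_pos_ineq(1)[OF P PS])
  note T = posdef_tr_det[OF P]
  have trP: "tr2 P \<noteq> 0" unfolding T(1) of_real_eq_0_iff using T(3) by linarith
  thus "tr2 S \<noteq> 0" using PS by (simp add: tr2_cscale)
  have eq: "cscale (1/tr2 S) S = cscale (1/tr2 P) P"
    using c by (simp add: PS tr2_cscale cscale_cscale)
  have detP: "det P \<noteq> 0" unfolding T(2) of_real_eq_0_iff using T(4) by linarith
  show "det (cscale (1/tr2 S) S) \<noteq> 0" unfolding eq det_cscale using trP detP by simp
  fix v
  have "0 \<le> Re (qform P v)"
  proof (cases "v = 0")
    case True thus ?thesis by (simp add: qform_def)
  next
    case False thus ?thesis using P by (auto simp: pos_def_def less_imp_le)
  qed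
  moreover have "Re (qform (cscale (1/tr2 P) P) v) = Re (qform P v) / (Re (P$1$1) + Re (P$2$2))"
    unfolding qform_cscale T(1) by (simp add: Re_divide_of_real)
  ultimately show "0 \<le> Re (qform (cscale (1/tr2 S) S) v)" unfolding eq using T(3) by simp
qed



lemma cis_sphere[simp]: "cis t \<in> sphere 0 1" by simp

lemma generic_near:
  assumes fin: "finite B" and e0: "\<epsilon> > 0"
  shows "\<exists>\<theta>. \<theta>0 < \<theta> \<and> \<theta> < \<theta>0 + \<epsilon> \<and> cis \<theta> \<notin> B"
proof -
  define e where "e = min \<epsilon> pi"
  have e: "e > 0" "e \<le> pi" "e \<le> \<epsilon>" using e0 by (auto simp: e_def)
  have inj: "inj_on cis {\<theta>0<..<\<theta>0+e}"
  proof (rule inj_onI)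
    fix a b assume a: "a \<in> {\<theta>0<..<\<theta>0+e}" and b: "b \<in> {\<theta>0<..<\<theta>0+e}" and ab: "cis a = cis b"
    have "sin a = sin b \<and> cos a = cos b" using arg_cong[OF ab, of Re] arg_cong[OF ab, of Im] by simp
    then obtain n :: int where n: "a = b + 2 * pi * n" by (auto simp: sin_cos_eq_iff)
    have "\<bar>a - b\<bar> < pi" using a b e by auto
    hence "2 * pi * \<bar>real_of_int n\<bar> < pi * 1" using n by (simp add: abs_mult)
    hence "\<bar>real_of_int n\<bar> < 1" using pi_gt_zero by (simp add: mult_less_cancel_left)
    hence "n = 0" by linarith
    thus "a = b" using n by simp
  qed
  have "finite (cis -` B \<inter> {\<theta>0<..<\<theta>0+e})" by (rule finite_vimage_IntI[OF fin inj])
  moreover have "infinite {\<theta>0<..<\<theta>0+e}" using e by simp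
  ultimately have "infinite ({\<theta>0<..<\<theta>0+e} - (cis -` B \<inter> {\<theta>0<..<\<theta>0+e}))" by (rule Diff_infinite_finite)
  hence "({\<theta>0<..<\<theta>0+e} - (cis -` B \<inter> {\<theta>0<..<\<theta>0+e})) \<noteq> {}" by (metis finite.emptyI)
  then obtain \<theta> where "\<theta> \<in> {\<theta>0<..<\<theta>0+e}" "cis \<theta> \<notin> B" by blast
  thus ?thesis using e by (intro exI[of _ \<theta>]) auto
qed

lemma closed_limit:
  fixes g :: "real \<Rightarrow> real"
  assumes cont: "isCont g \<theta>0" and fin: "finite B"
    and loc: "\<delta> > 0" "\<forall>\<theta>. \<bar>\<theta> - \<theta>0\<bar> < \<delta> \<longrightarrow> cis \<theta> \<notin> B \<longrightarrow> 0 \<le> g \<theta>"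
  shows "0 \<le> g \<theta>0"
proof (rule ccontr)
  assume "\<not> 0 \<le> g \<theta>0"
  hence neg: "g \<theta>0 < 0" by simp
  have "(g \<longlongrightarrow> g \<theta>0) (at \<theta>0)" using cont by (simp add: isCont_def)
  from order_tendstoD(2)[OF this neg] obtain d where d: "d > 0" "\<forall>x. x \<noteq> \<theta>0 \<and> dist x \<theta>0 < d \<longrightarrow> g x < 0"
    unfolding eventually_at by blast
  obtain \<theta> where th: "\<theta>0 < \<theta>" "\<theta> < \<theta>0 + min d \<delta>" "cis \<theta> \<notin> B"
    using generic_near[OF fin, of "min d \<delta>" \<theta>0] d loc by auto
  have "g \<theta> < 0" using d(2) th by (auto simp: dist_real_def)
  moreover have "0 \<le> g \<theta>" using loc(2) th by auto
  ultimately show False by simp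
qed

lemma trace_nz:
  assumes c11: "isCont (\<lambda>\<theta>. s \<theta> $ 1 $ 1) \<theta>1" and c12: "isCont (\<lambda>\<theta>. s \<theta> $ 1 $ 2) \<theta>1"
    and c21: "isCont (\<lambda>\<theta>. s \<theta> $ 2 $ 1) \<theta>1" and c22: "isCont (\<lambda>\<theta>. s \<theta> $ 2 $ 2) \<theta>1"
    and d0: "\<delta> > 0" and loc: "\<forall>\<theta>. \<bar>\<theta> - \<theta>1\<bar> < \<delta> \<longrightarrow> s \<theta> \<noteq> 0 \<and> E (cis \<theta>) = cspan1 (s \<theta>)"
    and selfadj: "\<forall>z\<in>sphere 0 1. \<forall>A\<in>E z. conj_transpose A \<in> E z"
    and fin: "finite {z\<in>sphere 0 1. \<not> (\<exists>A\<in>E z. pos_def A)}"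
  shows "tr2 (s \<theta>1) \<noteq> 0"
proof
  assume t: "tr2 (s \<theta>1) = 0"
  have l1: "s \<theta>1 \<noteq> 0" "E (cis \<theta>1) = cspan1 (s \<theta>1)" using loc d0 by auto
  have "s \<theta>1 \<in> cspan1 (s \<theta>1)" unfolding cspan1_def by (rule CollectI, rule exI[of _ 1]) (simp add: cmat2_eq)
  hence "conj_transpose (s \<theta>1) \<in> cspan1 (s \<theta>1)" using selfadj l1 cis_sphere by metis
  then obtain c where c: "conj_transpose (s \<theta>1) = cscale c (s \<theta>1)" by (auto simp: cspan1_def)
  have dn: "det (s \<theta>1) \<noteq> 0" by (rule tr_zero_det[OF l1(1) c t])
  define g where "g \<theta> = (cmod (tr2 (s \<theta>)))^2 - 4 * cmod (det (s \<theta>))" for \<theta>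
  have "isCont g \<theta>1" unfolding g_def tr2_def det_2
    by (intro continuous_intros c11 c12 c21 c22)
  moreover have "\<forall>\<theta>. \<bar>\<theta> - \<theta>1\<bar> < \<delta> \<longrightarrow> cis \<theta> \<notin> {z\<in>sphere 0 1. \<not> (\<exists>A\<in>E z. pos_def A)} \<longrightarrow> 0 \<le> g \<theta>"
  proof (intro allI impI)
    fix \<theta> assume th: "\<bar>\<theta> - \<theta>1\<bar> < \<delta>" "cis \<theta> \<notin> {z\<in>sphere 0 1. \<not> (\<exists>A\<in>E z. pos_def A)}"
    then obtain P where P: "P \<in> E (cis \<theta>)" "pos_def P" by auto
    with loc th obtain k where "P = cscale k (s \<theta>)" by (auto simp: cspan1_def)
    from cspan_pos_ineq(2)[OF P(2) this] show "0 \<le> g \<theta>" by (simp add: g_def)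
  qed
  ultimately have "0 \<le> g \<theta>1" using closed_limit[OF _ fin d0] by blast
  moreover have "g \<theta>1 < 0" using t dn by (simp add: g_def)
  ultimately show False by simp
qed



lemma sphere_cis: assumes "z \<in> sphere (0::complex) 1" shows "cis (Arg z) = z"
proof -
  have "z \<noteq> 0" "cmod z = 1" using assms by auto
  thus ?thesis by (simp add: cis_Arg sgn_eq)
qed

lemma self_in_cspan1: "S \<in> cspan1 S"
  unfolding cspan1_def by (rule CollectI, rule exI[of _ 1]) (simp add: cmat2_eq)

theorem mainTheorem10:
  fixes E :: "complex \<Rightarrow> cmat2 set"
  assumes linebdl: "analytic_line_subbundle E"
    and selfadj: "\<forall>z\<in>sphere 0 1. \<forall>A\<in>E z. conj_transpose A \<in> E z"
    and posdef: "finite {z\<in>sphere 0 1. \<not> (\<exists>A\<in>E z. pos_def A)}"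
  shows "\<exists>X :: complex \<Rightarrow> cmat2.
           real_analytic_circle_section X \<and>
           (\<forall>z\<in>sphere 0 1. X z \<in> E z \<and> pos_semidef (X z)) \<and>
           (\<exists>z\<in>sphere 0 1. det (X z) \<noteq> 0)"
proof -
  define B where "B = {z\<in>sphere 0 1. \<not> (\<exists>A\<in>E z. pos_def A)}"
  have fin: "finite B" using posdef by (simp add: B_def)
  define X where "X = Xof E"
  have key: "\<exists>r>0. \<exists>s. real_analytic_mat_on {\<theta>0 - r<..<\<theta>0 + r} s \<and>
      (\<forall>\<theta>\<in>{\<theta>0 - r<..<\<theta>0 + r}. s \<theta> \<noteq> 0 \<and> E (cis \<theta>) = cspan1 (s \<theta>) \<and>
          conj_transpose (s \<theta>) \<in> cspan1 (s \<theta>) \<and>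
          tr2 (s \<theta>) \<noteq> 0 \<and> X (cis \<theta>) = cscale (1 / tr2 (s \<theta>)) (s \<theta>))" for \<theta>0
  proof -
    obtain r s where r: "r > 0" and an: "real_analytic_mat_on {\<theta>0 - r<..<\<theta>0 + r} s"
      and ls: "\<forall>\<theta>\<in>{\<theta>0 - r<..<\<theta>0 + r}. s \<theta> \<noteq> 0 \<and> E (cis \<theta>) = cspan1 (s \<theta>)"
      using linebdl unfolding analytic_line_subbundle_def by blast
    have "s \<theta> \<noteq> 0 \<and> E (cis \<theta>) = cspan1 (s \<theta>) \<and> conj_transpose (s \<theta>) \<in> cspan1 (s \<theta>) \<and>
          tr2 (s \<theta>) \<noteq> 0 \<and> X (cis \<theta>) = cscale (1 / tr2 (s \<theta>)) (s \<theta>)"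
      if th: "\<theta> \<in> {\<theta>0 - r<..<\<theta>0 + r}" for \<theta>
    proof -
      have l1: "s \<theta> \<noteq> 0" "E (cis \<theta>) = cspan1 (s \<theta>)" using ls th by auto
      have ct: "conj_transpose (s \<theta>) \<in> cspan1 (s \<theta>)"
        using selfadj l1 cis_sphere self_in_cspan1 by metis
      have cont: "isCont (\<lambda>\<theta>. s \<theta> $ i $ j) \<theta>" for i j
        using an th unfolding real_analytic_mat_on_def by (intro ra_cont) auto
      define \<delta> where "\<delta> = min (\<theta> - (\<theta>0 - r)) (\<theta>0 + r - \<theta>)"
      have d0: "\<delta> > 0" using th by (simp add: \<delta>_def)
      have loc: "\<forall>\<theta>'. \<bar>\<theta>' - \<theta>\<bar> < \<delta> \<longrightarrow> s \<theta>' \<noteq> 0 \<and> E (cis \<theta>') = cspan1 (s \<theta>')"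
        using ls by (auto simp: \<delta>_def abs_less_iff)
      have tn: "tr2 (s \<theta>) \<noteq> 0"
        by (rule trace_nz[OF cont cont cont cont d0 loc selfadj posdef])
      have ctE: "conj_transpose (s \<theta>) \<in> E (cis \<theta>)" using ct l1 by simp
      have "X (cis \<theta>) = cscale (1 / tr2 (s \<theta>)) (s \<theta>)"
        unfolding X_def by (rule Xof_eq[of E "cis \<theta>" "s \<theta>", OF l1(2) l1(1) ctE tn])
      thus ?thesis using l1 ct tn by simp
    qed
    thus ?thesis using r an by blast
  qed
  have gen: "0 \<le> Re (qform (X (cis \<theta>)) v) \<and> det (X (cis \<theta>)) \<noteq> 0" if nb: "cis \<theta> \<notin> B" for \<theta> v
  proof -
    obtain r s where r: "r > 0" and ks: "\<forall>\<theta>'\<in>{\<theta> - r<..<\<theta> + r}. s \<theta>' \<noteq> 0 \<and> E (cis \<theta>') = cspan1 (s \<theta>') \<and>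
          conj_transpose (s \<theta>') \<in> cspan1 (s \<theta>') \<and>
          tr2 (s \<theta>') \<noteq> 0 \<and> X (cis \<theta>') = cscale (1 / tr2 (s \<theta>')) (s \<theta>')"
      using key[of \<theta>] by blast
    have k: "E (cis \<theta>) = cspan1 (s \<theta>)" "X (cis \<theta>) = cscale (1 / tr2 (s \<theta>)) (s \<theta>)" using ks r by auto
    obtain P where P: "P \<in> E (cis \<theta>)" "pos_def P" using nb by (auto simp: B_def)
    then obtain c where c: "P = cscale c (s \<theta>)" using k by (auto simp: cspan1_def)
    show ?thesis unfolding k(2) using generic_X(2,3)[OF P(2) c] by blast
  qed
  have an: "real_analytic_circle_section X"
    unfolding real_analytic_circle_section_def real_analytic_mat_on_def real_analytic_on_def
  proof (intro allI ballI)
    fix i j :: 2 and \<theta>0 :: real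
    obtain r s where r: "r > 0" and an: "real_analytic_mat_on {\<theta>0 - r<..<\<theta>0 + r} s"
      and ks: "\<forall>\<theta>'\<in>{\<theta>0 - r<..<\<theta>0 + r}. s \<theta>' \<noteq> 0 \<and> E (cis \<theta>') = cspan1 (s \<theta>') \<and>
          conj_transpose (s \<theta>') \<in> cspan1 (s \<theta>') \<and>
          tr2 (s \<theta>') \<noteq> 0 \<and> X (cis \<theta>') = cscale (1 / tr2 (s \<theta>')) (s \<theta>')"
      using key[of \<theta>0] by blast
    have th0: "\<theta>0 \<in> {\<theta>0 - r<..<\<theta>0 + r}" using r by simp
    have "s \<theta>0 $ 1 $ 1 + s \<theta>0 $ 2 $ 2 \<noteq> 0" using ks th0 by (simp add: tr2_def)
    then obtain r' a where r': "r' > 0" and sm: "\<forall>y. \<bar>y - \<theta>0\<bar> < r' \<longrightarrow>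
        (\<lambda>n. a n * complex_of_real (y - \<theta>0) ^ n) sums (s y $ i $ j / (s y $ 1 $ 1 + s y $ 2 $ 2))"
      using ra_quot[of _ "\<lambda>y. s y $ i $ j" "\<lambda>y. s y $ 1 $ 1" "\<lambda>y. s y $ 2 $ 2", OF _ _ _ th0] an
      unfolding real_analytic_mat_on_def by blast
    show "\<exists>r>0. \<exists>a. \<forall>y. \<bar>y - \<theta>0\<bar> < r \<longrightarrow> (\<lambda>n. a n * complex_of_real (y - \<theta>0) ^ n) sums (X (cis y) $ i $ j)"
    proof (intro exI conjI allI impI)
      show "0 < min r r'" using r r' by simp
      fix y assume y: "\<bar>y - \<theta>0\<bar> < min r r'"
      hence "y \<in> {\<theta>0 - r<..<\<theta>0 + r}" by (auto simp: abs_less_iff)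
      hence "X (cis y) $ i $ j = s y $ i $ j / (s y $ 1 $ 1 + s y $ 2 $ 2)" using ks by (simp add: tr2_def)
      thus "(\<lambda>n. a n * complex_of_real (y - \<theta>0) ^ n) sums (X (cis y) $ i $ j)" using sm y by simp
    qed
  qed
  have contX: "isCont (\<lambda>\<theta>. X (cis \<theta>) $ i $ j) \<theta>" for i j \<theta>
    using an unfolding real_analytic_circle_section_def real_analytic_mat_on_def by (intro ra_cont) auto
  have psd: "X z \<in> E z \<and> pos_semidef (X z)" if z: "z \<in> sphere 0 1" for z
  proof -
    define \<theta> where "\<theta> = Arg z"
    have zc: "z = cis \<theta>" using sphere_cis[OF z] by (simp add: \<theta>_def)
    obtain r s where r: "r > 0" and ks: "\<forall>\<theta>'\<in>{\<theta> - r<..<\<theta> + r}. s \<theta>' \<noteq> 0 \<and> E (cis \<theta>') = cspan1 (s \<theta>') \<and>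
          conj_transpose (s \<theta>') \<in> cspan1 (s \<theta>') \<and>
          tr2 (s \<theta>') \<noteq> 0 \<and> X (cis \<theta>') = cscale (1 / tr2 (s \<theta>')) (s \<theta>')"
      using key[of \<theta>] by blast
    have k: "s \<theta> \<noteq> 0" "E (cis \<theta>) = cspan1 (s \<theta>)" "conj_transpose (s \<theta>) \<in> cspan1 (s \<theta>)"
      "tr2 (s \<theta>) \<noteq> 0" "X (cis \<theta>) = cscale (1 / tr2 (s \<theta>)) (s \<theta>)" using ks r by auto
    have inE: "X z \<in> E z" unfolding zc k(2) k(5) cspan1_def by blast
    have herm: "hermitian (X z)" unfolding zc k(5) by (rule fiber_X(1)[OF k(1,3,4)])
    have "0 \<le> Re (qform (X z) v)" for v
    proof -
      define g where "g t = Re (qform (X (cis t)) v)" for t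
      have "isCont g \<theta>" unfolding g_def qform_expand
        by (intro continuous_intros continuous_Re contX)
      moreover have "\<forall>t. \<bar>t - \<theta>\<bar> < 1 \<longrightarrow> cis t \<notin> B \<longrightarrow> 0 \<le> g t" using gen by (simp add: g_def)
      ultimately have "0 \<le> g \<theta>" by (rule closed_limit[OF _ fin zero_less_one])
      thus ?thesis by (simp add: g_def zc)
    qed
    thus ?thesis using inE herm by (simp add: pos_semidef_def)
  qed
  obtain \<theta> where "cis \<theta> \<notin> B" using generic_near[OF fin zero_less_one] by blast
  hence "det (X (cis \<theta>)) \<noteq> 0" using gen by blast
  hence "\<exists>z\<in>sphere 0 1. det (X z) \<noteq> 0" using cis_sphere by blast
  thus ?thesis using an psd by blast
qed

end
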